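(* Let $r\ge 1$ be an integer, $\overline{x}\in\mathbb{R}^n$, and let $f:\mathbb{R}^n\to\mathbb{R}$ be of class $C^r$ on a neighbourhood $V$ of $\overline{x}$. Let $\Sigma\subset\mathbb{R}^n$ be locally closed at $\overline{x}$ with $\{x\in V\mid \nabla f(x)=0\}\subset\Sigma$. Let $c,\delta,\overline{w}>0$ satisfy $$\|\nabla f(x)\|\ge c\,\mathrm{dist}(x,\Sigma)^{r-1}\quad\text{for all }x\in\mathcal{H}_r^{\Sigma}(f,\overline{x};\overline{w})\cap\mathbb{B}_\delta(\overline{x}),$$ and assume moreover that the polynomial $T^rf(z)$ is the same for all $z\in\Sigma\cap\mathbb{B}_\delta(\overline{x})$. Then: (i) $f$ has a local minimum at $\overline{x}$ if and only if the polynomial $T^rf(\overline{x})$ has a local minimum at $\overline{x}$; (ii) if $f$ has a local minimum at $\overline{x}$, then there exists $\epsilon>0$ such that for every function $h:\mathbb{R}^n\to\mathbb{R}$ for which there is $\rho>0$ with $|h(x)-h(\overline{x})|\le\epsilon\,\mathrm{dist}(x,\Sigma)^r$ for all $x\in\mathbb{B}_\rho(\overline{x})$, the function $f+h$ has a local minimum at $\overline{x}$.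
   Context: $\mathbb{B}_\delta(x)$ denotes the closed Euclidean ball of radius $\delta$ centered at $x$, and $\mathrm{dist}(x,\Sigma)=\inf_{y\in\Sigma}\|x-y\|$. A set $\Sigma$ is locally closed at $x$ if $\Sigma\cap W$ is closed for some closed neighbourhood $W$ of $x$. We use the convention $t^0=1$ for all $t\ge 0$. For a function $g$ of class $C^r$ near a point $z$, $T^rg(z)$ denotes its $r$th Taylor polynomial at $z$: $T^rg(z)(x)=\sum_{j=0}^r\frac{1}{j!}\sum_{i_1,\dots,i_j=1}^n\frac{\partial^j g}{\partial x_{i_1}\cdots\partial x_{i_j}}(z)(x_{i_1}-z_{i_1})\cdots(x_{i_j}-z_{i_j})$. The horn-neighbourhood of degree $r$ and width $\overline{w}>0$ is $\mathcal{H}_r^{\Sigma}(f,\overline{x};\overline{w}):=\{x\in\mathbb{R}^n\mid |f(x)-f(\overline{x})|\le\overline{w}\,\mathrm{dist}(x,\Sigma)^r\}$. *)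

theory Defs
  imports "HOL-Analysis.Analysis"
begin

definition has_partial :: "'n::finite \<Rightarrow> (real^'n \<Rightarrow> real) \<Rightarrow> real^'n \<Rightarrow> bool" where
  "has_partial i g x \<longleftrightarrow> (\<exists>d. ((\<lambda>t. g (x + t *\<^sub>R axis i 1)) has_real_derivative d) (at 0))"

definition partial_deriv :: "'n::finite \<Rightarrow> (real^'n \<Rightarrow> real) \<Rightarrow> real^'n \<Rightarrow> real" where
  "partial_deriv i g x = (THE d. ((\<lambda>t. g (x + t *\<^sub>R axis i 1)) has_real_derivative d) (at 0))"

fun pderivs :: "'n::finite list \<Rightarrow> (real^'n \<Rightarrow> real) \<Rightarrow> real^'n \<Rightarrow> real" where
  "pderivs [] g = g"
| "pderivs (i # is) g = partial_deriv i (pderivs is g)"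

definition C_r_on :: "nat \<Rightarrow> (real^'n::finite) set \<Rightarrow> (real^'n \<Rightarrow> real) \<Rightarrow> bool" where
  "C_r_on r V g \<longleftrightarrow>
     (\<forall>is :: 'n list. length is < r \<longrightarrow> (\<forall>i. \<forall>x\<in>V. has_partial i (pderivs is g) x)) \<and>
     (\<forall>is :: 'n list. length is \<le> r \<longrightarrow> continuous_on V (pderivs is g))"

definition grad :: "(real^'n::finite \<Rightarrow> real) \<Rightarrow> real^'n \<Rightarrow> real^'n" where
  "grad g x = (\<chi> i. partial_deriv i g x)"

definition taylor_poly :: "nat \<Rightarrow> (real^'n::finite \<Rightarrow> real) \<Rightarrow> real^'n \<Rightarrow> real^'n \<Rightarrow> real" where
  "taylor_poly r g z x =
     (\<Sum>j\<le>r. (1 / fact j) *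
        (\<Sum>is\<in>{is :: 'n list. length is = j}.
            pderivs is g z * (\<Prod>k<j. x $ (is ! k) - z $ (is ! k))))"

definition horn_nbhd :: "nat \<Rightarrow> (real^'n::finite) set \<Rightarrow> (real^'n \<Rightarrow> real) \<Rightarrow> real^'n \<Rightarrow> real \<Rightarrow> (real^'n) set" where
  "horn_nbhd r \<Sigma> f xb w = {x. \<bar>f x - f xb\<bar> \<le> w * infdist x \<Sigma> ^ r}"

definition locally_closed_at :: "('a::topological_space) set \<Rightarrow> 'a \<Rightarrow> bool" where
  "locally_closed_at S x \<longleftrightarrow> (\<exists>W. closed W \<and> x \<in> interior W \<and> closed (S \<inter> W))"

definition local_min_at :: "('a::metric_space \<Rightarrow> real) \<Rightarrow> 'a \<Rightarrow> bool" where
  "local_min_at g x \<longleftrightarrow> (\<exists>e>0. \<forall>y\<in>ball x e. g x \<le> g y)"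

end

theory Submission
  imports Defs
begin

lemma pd_DERIV:
  fixes g :: "real^'n \<Rightarrow> real"
  assumes "has_partial i g (q + t0 *\<^sub>R axis i 1)"
  shows "((\<lambda>t. g (q + t *\<^sub>R axis i 1)) has_real_derivative
           partial_deriv i g (q + t0 *\<^sub>R axis i 1)) (at t0)"
proof -
  define p where "p = q + t0 *\<^sub>R axis i 1"
  obtain d where d: "((\<lambda>t. g (p + t *\<^sub>R axis i 1)) has_real_derivative d) (at 0)"
    using assms unfolding has_partial_def p_def by blast
  have pd: "partial_deriv i g p = d"
    unfolding partial_deriv_def
    by (rule the_equality[where P="\<lambda>d. ((\<lambda>t. g (p + t *\<^sub>R axis i 1)) has_real_derivative d) (at 0)", OF d])
       (metis DERIV_unique d)
  have "((\<lambda>x. (\<lambda>t. g (p + t *\<^sub>R axis i 1)) (x + - t0)) has_real_derivative d) (at t0)"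
    using d DERIV_shift[of "\<lambda>t. g (p + t *\<^sub>R axis i 1)" d t0 "- t0"] by simp
  moreover have "(\<lambda>x. (\<lambda>t. g (p + t *\<^sub>R axis i 1)) (x + - t0)) = (\<lambda>t. g (q + t *\<^sub>R axis i 1))"
    by (rule ext) (simp add: p_def algebra_simps)
  ultimately show ?thesis using pd p_def by simp
qed

lemma coord_step:
  fixes g :: "real^'n \<Rightarrow> real"
  assumes "\<And>t. min 0 s \<le> t \<Longrightarrow> t \<le> max 0 s \<Longrightarrow>
             has_partial i g (q + t *\<^sub>R axis i 1) \<and>
             \<bar>partial_deriv i g (q + t *\<^sub>R axis i 1) - G\<bar> \<le> e"
  shows "\<bar>g (q + s *\<^sub>R axis i 1) - g q - G * s\<bar> \<le> e * \<bar>s\<bar>"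
proof (cases "s = 0")
  case True then show ?thesis by simp
next
  case False
  define diff where "diff = (\<lambda>m::nat. if m = 0 then (\<lambda>t. g (q + t *\<^sub>R axis i 1))
          else (\<lambda>t. partial_deriv i g (q + t *\<^sub>R axis i 1)))"
  have "\<exists>t. (if s < 0 then s < t \<and> t < 0 else 0 < t \<and> t < s) \<and>
    (\<lambda>t. g (q + t *\<^sub>R axis i 1)) s = (\<Sum>m<1. (diff m 0 / fact m) * (s - 0)^m) + (diff 1 t / fact 1) * (s - 0)^1"
  proof (rule Taylor[of 1 diff _ "min 0 s" "max 0 s"])
    show "\<forall>m t. m < 1 \<and> min 0 s \<le> t \<and> t \<le> max 0 s \<longrightarrow> DERIV (diff m) t :> diff (Suc m) t"
      using assms by (auto simp: diff_def intro!: pd_DERIV)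
  qed (use False in \<open>auto simp: diff_def\<close>)
  then obtain t where t: "min 0 s \<le> t" "t \<le> max 0 s"
     and eq: "g (q + s *\<^sub>R axis i 1) = g q + partial_deriv i g (q + t *\<^sub>R axis i 1) * s"
    by (auto simp: diff_def split: if_splits) (metis less_imp_le)+
  have "\<bar>g (q + s *\<^sub>R axis i 1) - g q - G * s\<bar> = \<bar>partial_deriv i g (q + t *\<^sub>R axis i 1) - G\<bar> * \<bar>s\<bar>"
    by (simp add: eq abs_mult[symmetric] algebra_simps)
  also have "\<dots> \<le> e * \<bar>s\<bar>" using assms[OF t] by (simp add: mult_right_mono)
  finally show ?thesis .
qed

lemma grad_eq: "grad g = (\<lambda>x. \<chi> i. partial_deriv i g x)"
  by (rule ext) (simp add: grad_def)

lemma partials_has_derivative: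
  fixes g :: "real^'n \<Rightarrow> real"
  assumes V: "open V" "y \<in> V" and hp: "\<And>i x. x \<in> V \<Longrightarrow> has_partial i g x"
    and cp: "\<And>i. continuous_on V (partial_deriv i g)"
  shows "(g has_derivative (\<lambda>h. grad g y \<bullet> h)) (at y)"
  unfolding has_derivative_at_alt
proof (intro conjI allI impI)
  show "bounded_linear (\<lambda>h. grad g y \<bullet> h)" by (rule bounded_linear_inner_right)
  fix e :: real assume e: "e > 0"
  define e' where "e' = e / real CARD('n)"
  have e': "e' > 0" using e by (simp add: e'_def)
  have cg: "continuous_on V (grad g)" unfolding grad_eq by (intro continuous_on_vec_lambda cp)
  then obtain d1 where d1: "d1 > 0" "\<forall>u\<in>V. dist u y < d1 \<longrightarrow> dist (grad g u) (grad g y) < e'"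
    using continuous_on_iff V e' by metis
  obtain d2 where d2: "d2 > 0" "ball y d2 \<subseteq> V" using V open_contains_ball by blast
  show "\<exists>d>0. \<forall>z. norm (z - y) < d \<longrightarrow> norm (g z - g y - grad g y \<bullet> (z - y)) \<le> e * norm (z - y)"
  proof (intro exI[of _ "min d1 d2"] conjI allI impI)
    show "min d1 d2 > 0" using d1 d2 by simp
    fix z assume z: "norm (z - y) < min d1 d2"
    define h where "h = z - y"
    define pS where "pS = (\<lambda>S. \<chi> j. if j \<in> S then h $ j else 0)"
    have key: "\<bar>g (y + pS S) - g y - (\<Sum>i\<in>S. grad g y $ i * h $ i)\<bar> \<le> e' * card S * norm h"
      if "finite S" for S
      using that
    proof (induction S rule: finite_induct)
      case empty
      have "pS {} = 0" by (simp add: pS_def vec_eq_iff)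
      then show ?case by simp
    next
      case (insert i S)
      define q where "q = y + pS S"
      have eq: "y + pS (insert i S) = q + h $ i *\<^sub>R axis i 1"
        using insert(2) by (auto simp: q_def pS_def vec_eq_iff axis_def)
      have step: "\<bar>g (q + h $ i *\<^sub>R axis i 1) - g q - grad g y $ i * h $ i\<bar> \<le> e' * \<bar>h $ i\<bar>"
      proof (rule coord_step)
        fix t assume t: "min 0 (h $ i) \<le> t" "t \<le> max 0 (h $ i)"
        have "norm (pS S + t *\<^sub>R axis i 1) \<le> norm h"
        proof (rule norm_le_componentwise_cart)
          fix j
          show "norm ((pS S + t *\<^sub>R axis i 1) $ j) \<le> norm (h $ j)"
            using t insert(2) by (auto simp: pS_def axis_def)
        qed
        then have u: "q + t *\<^sub>R axis i 1 \<in> ball y (min d1 d2)"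
          using z by (simp add: q_def h_def dist_norm add.assoc norm_minus_commute[of "pS S + t *\<^sub>R axis i 1" 0, simplified] algebra_simps)
        then have uV: "q + t *\<^sub>R axis i 1 \<in> V" using d2 by auto
        have "\<bar>grad g (q + t *\<^sub>R axis i 1) $ i - grad g y $ i\<bar> \<le> dist (grad g (q + t *\<^sub>R axis i 1)) (grad g y)"
          using component_le_norm_cart[of "grad g (q + t *\<^sub>R axis i 1) - grad g y" i]
          by (simp add: dist_norm)
        also have "\<dots> < e'" using d1(2) uV u by (auto simp: dist_commute)
        finally show "has_partial i g (q + t *\<^sub>R axis i 1) \<and>
          \<bar>partial_deriv i g (q + t *\<^sub>R axis i 1) - grad g y $ i\<bar> \<le> e'"
          using hp[OF uV] by (simp add: grad_def)
      qed
      have hi: "\<bar>h $ i\<bar> \<le> norm h" by (rule component_le_norm_cart)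
      have "\<bar>g (y + pS (insert i S)) - g y - (\<Sum>i\<in>insert i S. grad g y $ i * h $ i)\<bar>
          = \<bar>(g (q + h $ i *\<^sub>R axis i 1) - g q - grad g y $ i * h $ i)
             + (g (y + pS S) - g y - (\<Sum>i\<in>S. grad g y $ i * h $ i))\<bar>"
        using insert(1,2) by (simp add: eq q_def)
      also have "\<dots> \<le> e' * \<bar>h $ i\<bar> + e' * card S * norm h"
        using step insert(3) by linarith
      also have "\<dots> \<le> e' * norm h + e' * card S * norm h"
        using hi e' by (simp add: mult_left_mono)
      also have "\<dots> = e' * card (insert i S) * norm h"
        using insert(1,2) by (simp add: algebra_simps)
      finally show ?case .
    qed
    have "pS UNIV = h" by (simp add: pS_def vec_eq_iff)
    moreover have "(\<Sum>i\<in>UNIV. grad g y $ i * h $ i) = grad g y \<bullet> h"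
      by (simp add: inner_vec_def)
    moreover have "e' * card (UNIV :: 'n set) = e" by (simp add: e'_def)
    ultimately show "norm (g z - g y - grad g y \<bullet> (z - y)) \<le> e * norm (z - y)"
      using key[of UNIV] by (simp add: h_def)
  qed
qed

lemma min_grad_bound:
  fixes g :: "real^'n \<Rightarrow> real"
  assumes der: "(g has_derivative (\<lambda>h. G \<bullet> h)) (at y)" and e: "e > 0" and m: "m \<ge> 0"
    and mn: "\<forall>u\<in>ball y e. g y + m * norm (y - x) \<le> g u + m * norm (u - x)"
  shows "norm G \<le> m"
proof (cases "G = 0")
  case True then show ?thesis using m by simp
next
  case False
  then have nG: "norm G > 0" by simp
  have d1: "((\<lambda>s::real. y - s *\<^sub>R G) has_derivative (\<lambda>s. - (s *\<^sub>R G))) (at 0)"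
    by (auto intro!: derivative_eq_intros)
  have "((\<lambda>s. g (y - s *\<^sub>R G)) has_derivative (\<lambda>s. G \<bullet> (- (s *\<^sub>R G)))) (at 0)"
    using has_derivative_compose[OF d1, of g "\<lambda>h. G \<bullet> h"] der by simp
  moreover have "(\<lambda>s. G \<bullet> (- (s *\<^sub>R G))) = (*) (- (G \<bullet> G))" by (rule ext) simp
  ultimately have "((\<lambda>s. g (y - s *\<^sub>R G)) has_real_derivative (- (G \<bullet> G))) (at 0)"
    by (simp add: has_field_derivative_def)
  then have lim: "((\<lambda>s. (g (y - s *\<^sub>R G) - g y) / s) \<longlongrightarrow> - (G \<bullet> G)) (at 0)"
    unfolding has_field_derivative_iff by simp
  then have lim2: "((\<lambda>s. (g (y - s *\<^sub>R G) - g y) / s) \<longlongrightarrow> - (G \<bullet> G)) (at_right 0)"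
    by (rule tendsto_mono[OF at_le, rotated]) simp
  have ev: "eventually (\<lambda>s. - m * norm G \<le> (g (y - s *\<^sub>R G) - g y) / s) (at_right 0)"
    unfolding eventually_at_right_field
  proof (intro exI[of _ "e / norm G"] conjI allI impI)
    show "(0::real) < e / norm G" using e nG by simp
    fix s :: real assume s: "0 < s" "s < e / norm G"
    have "norm (s *\<^sub>R G) < e" using s nG by (simp add: field_simps)
    then have "y - s *\<^sub>R G \<in> ball y e" by (simp add: dist_norm)
    then have A: "g y + m * norm (y - x) \<le> g (y - s *\<^sub>R G) + m * norm (y - s *\<^sub>R G - x)"
      using mn by blast
    have "norm (y - s *\<^sub>R G - x) \<le> norm (y - x) + s * norm G"
      using norm_triangle_ineq4[of "y - x" "s *\<^sub>R G"] s by (simp add: algebra_simps)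
    then have "m * norm (y - s *\<^sub>R G - x) \<le> m * norm (y - x) + m * (s * norm G)"
      using m by (metis distrib_left mult_left_mono)
    then have "- m * norm G * s \<le> g (y - s *\<^sub>R G) - g y" using A by (simp add: algebra_simps)
    then show "- m * norm G \<le> (g (y - s *\<^sub>R G) - g y) / s" using s by (simp add: field_simps)
  qed
  have "- m * norm G \<le> - (G \<bullet> G)"
    by (rule tendsto_lowerbound[OF lim2 ev]) simp
  then have "norm G * norm G \<le> m * norm G" by (simp add: power2_norm_eq_inner[symmetric] power2_eq_square)
  then show ?thesis using nG by simp
qed

definition Dj :: "nat \<Rightarrow> (real^'n::finite \<Rightarrow> real) \<Rightarrow> real^'n \<Rightarrow> real^'n \<Rightarrow> real" where
  "Dj m g v u = (\<Sum>is\<in>{is::'n list. length is = m}. pderivs is g u * (\<Prod>k<m. v $ (is ! k)))"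

lemma finite_lists_len: "finite {is :: 'n::finite list. length is = m}"
  using finite_lists_length_eq[of "UNIV :: 'n set" m] by simp

lemma lists_Suc_eq: "{is :: 'a list. length is = Suc m} = (\<lambda>p. fst p # snd p) ` (UNIV \<times> {is. length is = m})"
  by (auto simp: length_Suc_conv image_iff)

lemma Dj_Suc:
  "Dj (Suc m) g v u = (\<Sum>i\<in>UNIV. \<Sum>is\<in>{is. length is = m}. pderivs (i#is) g u * (v$i * (\<Prod>k<m. v$(is!k))))"
proof -
  have inj: "inj_on (\<lambda>p. fst p # snd p) (UNIV \<times> {is :: 'a list. length is = m})"
    by (auto simp: inj_on_def)
  have "Dj (Suc m) g v u = (\<Sum>p\<in>UNIV \<times> {is. length is = m}. pderivs (fst p # snd p) g u * (\<Prod>k<Suc m. v $ ((fst p # snd p) ! k)))"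
    unfolding Dj_def lists_Suc_eq by (subst sum.reindex[OF inj]) (simp add: comp_def)
  also have "\<dots> = (\<Sum>p\<in>UNIV \<times> {is. length is = m}. pderivs (fst p # snd p) g u * (v $ fst p * (\<Prod>k<m. v $ (snd p ! k))))"
    by (simp only: prod.lessThan_Suc_shift) simp
  also have "\<dots> = (\<Sum>i\<in>UNIV. \<Sum>is\<in>{is. length is = m}. pderivs (i#is) g u * (v$i * (\<Prod>k<m. v$(is!k))))"
    by (simp add: sum.cartesian_product case_prod_beta)
  finally show ?thesis .
qed

lemma Dj_0: "Dj 0 g v u = g u"
proof -
  have "{is :: 'a list. length is = 0} = {[]}" by auto
  then show ?thesis by (simp add: Dj_def)
qed

lemma Cr_has_derivative:
  fixes f :: "real^'n \<Rightarrow> real"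
  assumes fC: "C_r_on r V f" and V: "open V" "y \<in> V" and len: "length is < r"
  shows "(pderivs is f has_derivative (\<lambda>h. grad (pderivs is f) y \<bullet> h)) (at y)"
proof (rule partials_has_derivative[OF V])
  show "\<And>i x. x \<in> V \<Longrightarrow> has_partial i (pderivs is f) x" using fC len unfolding C_r_on_def by blast
  fix i
  have "continuous_on V (pderivs (i # is) f)" using fC len unfolding C_r_on_def by (metis Suc_leI length_Cons)
  then show "continuous_on V (partial_deriv i (pderivs is f))" by simp
qed

lemma Dj_DERIV:
  fixes f :: "real^'n \<Rightarrow> real"
  assumes fC: "C_r_on r V f" and V: "open V" and m: "m < r" and p: "z + t *\<^sub>R v \<in> V"
  shows "((\<lambda>t. Dj m f v (z + t *\<^sub>R v)) has_real_derivative Dj (Suc m) f v (z + t *\<^sub>R v)) (at t)"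
proof -
  let ?p = "z + t *\<^sub>R v"
  have d1: "((\<lambda>s::real. z + s *\<^sub>R v) has_derivative (\<lambda>s. s *\<^sub>R v)) (at t)"
    by (auto intro!: derivative_eq_intros)
  have trm: "((\<lambda>t. pderivs is f (z + t *\<^sub>R v)) has_real_derivative (grad (pderivs is f) ?p \<bullet> v)) (at t)"
    if "length is = m" for "is" :: "'n list"
  proof -
    have "((\<lambda>t. pderivs is f (z + t *\<^sub>R v)) has_derivative (\<lambda>s. grad (pderivs is f) ?p \<bullet> (s *\<^sub>R v))) (at t)"
      using has_derivative_compose[OF d1 Cr_has_derivative[OF fC V(1) p]] that m by simp
    moreover have "(\<lambda>s. grad (pderivs is f) ?p \<bullet> (s *\<^sub>R v)) = (*) (grad (pderivs is f) ?p \<bullet> v)"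
      by (rule ext) (simp add: mult.commute)
    ultimately show ?thesis by (simp add: has_field_derivative_def)
  qed
  have "((\<lambda>t. Dj m f v (z + t *\<^sub>R v)) has_real_derivative
        (\<Sum>is\<in>{is. length is = m}. (grad (pderivs is f) ?p \<bullet> v) * (\<Prod>k<m. v $ (is ! k)))) (at t)"
    unfolding Dj_def by (intro DERIV_sum DERIV_cmult_right trm) simp
  moreover have "(\<Sum>is\<in>{is. length is = m}. (grad (pderivs is f) ?p \<bullet> v) * (\<Prod>k<m. v $ (is ! k)))
      = Dj (Suc m) f v ?p"
    unfolding Dj_Suc
    by (subst sum.swap) (simp add: inner_vec_def grad_def sum_distrib_left algebra_simps)
  ultimately show ?thesis by simp
qed

lemma taylor_poly_Dj: "taylor_poly r g z (z + v) = (\<Sum>j\<le>r. Dj j g v z / fact j)"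
  unfolding taylor_poly_def Dj_def by simp

lemma taylor_remainder:
  fixes f :: "real^'n \<Rightarrow> real"
  assumes fC: "C_r_on r V f" and V: "open V" and r: "r \<ge> 1"
    and seg: "\<And>t. 0 \<le> t \<Longrightarrow> t \<le> 1 \<Longrightarrow> z + t *\<^sub>R v \<in> V"
  shows "\<exists>t. 0 < t \<and> t < 1 \<and>
     f (z + v) - taylor_poly r f z (z + v) = (Dj r f v (z + t *\<^sub>R v) - Dj r f v z) / fact r"
proof -
  have "\<exists>t. (if (1::real) < 0 then 1 < t \<and> t < 0 else 0 < t \<and> t < 1) \<and>
     (\<lambda>t. f (z + t *\<^sub>R v)) 1 = (\<Sum>m<r. ((\<lambda>m t. Dj m f v (z + t *\<^sub>R v)) m 0 / fact m) * (1 - 0)^m)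
        + ((\<lambda>m t. Dj m f v (z + t *\<^sub>R v)) r t / fact r) * (1 - 0)^r"
  proof (rule Taylor[of r _ _ 0 1])
    show "\<forall>m t. m < r \<and> 0 \<le> t \<and> t \<le> 1 \<longrightarrow> ((\<lambda>t. Dj m f v (z + t *\<^sub>R v)) has_real_derivative Dj (Suc m) f v (z + t *\<^sub>R v)) (at t)"
      using Dj_DERIV[OF fC V] seg by blast
  qed (use r in \<open>auto simp: Dj_0\<close>)
  then obtain t where t: "0 < t" "t < 1"
    and eq: "f (z + v) = (\<Sum>m<r. Dj m f v z / fact m) + Dj r f v (z + t *\<^sub>R v) / fact r"
    by auto
  have "taylor_poly r f z (z + v) = (\<Sum>m<r. Dj m f v z / fact m) + Dj r f v z / fact r"
    unfolding taylor_poly_Dj by (simp add: lessThan_Suc_atMost[symmetric])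
  then show ?thesis using t eq by (intro exI[of _ t]) (simp add: diff_divide_distrib)
qed

lemma prod_comp_bound: "\<bar>\<Prod>k<m. v $ (is ! k)\<bar> \<le> norm (v :: real^'n) ^ m"
proof -
  have "\<bar>\<Prod>k<m. v $ (is ! k)\<bar> = (\<Prod>k<m. \<bar>v $ (is ! k)\<bar>)" by (simp add: abs_prod)
  also have "\<dots> \<le> (\<Prod>k<m. norm v)" by (intro prod_mono) (simp add: component_le_norm_cart)
  also have "\<dots> = norm v ^ m" by simp
  finally show ?thesis .
qed

lemma Dj_diff_bound:
  "\<bar>Dj m g v a - Dj m g v b\<bar> \<le> (\<Sum>is\<in>{is. length is = m}. \<bar>pderivs is g a - pderivs is g b\<bar>) * norm v ^ m"
proof -
  have "\<bar>Dj m g v a - Dj m g v b\<bar> = \<bar>\<Sum>is\<in>{is. length is = m}. (pderivs is g a - pderivs is g b) * (\<Prod>k<m. v $ (is ! k))\<bar>"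
    unfolding Dj_def by (simp add: sum_subtractf[symmetric] algebra_simps)
  also have "\<dots> \<le> (\<Sum>is\<in>{is. length is = m}. \<bar>(pderivs is g a - pderivs is g b) * (\<Prod>k<m. v $ (is ! k))\<bar>)"
    by (rule sum_abs)
  also have "\<dots> \<le> (\<Sum>is\<in>{is. length is = m}. \<bar>pderivs is g a - pderivs is g b\<bar> * norm v ^ m)"
    by (intro sum_mono) (simp add: abs_mult mult_left_mono prod_comp_bound)
  also have "\<dots> = (\<Sum>is\<in>{is. length is = m}. \<bar>pderivs is g a - pderivs is g b\<bar>) * norm v ^ m"
    by (simp add: sum_distrib_right)
  finally show ?thesis .
qed

lemma taylor_uniform:
  fixes f :: "real^'n \<Rightarrow> real"
  assumes fC: "C_r_on r V f" and V: "open V" "xb \<in> V" and r: "r \<ge> 1" and eps: "\<epsilon> > 0"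
  shows "\<exists>s>0. ball xb s \<subseteq> V \<and>
     (\<forall>x\<in>ball xb s. \<forall>z\<in>ball xb s. \<bar>f x - taylor_poly r f z x\<bar> \<le> \<epsilon> * dist x z ^ r)"
proof -
  obtain s0 where s0: "s0 > 0" "cball xb s0 \<subseteq> V" using V open_contains_cball by blast
  define K where "K = cball xb s0"
  define L where "L = {is :: 'n list. length is = r}"
  define M where "M = (\<lambda>p. \<Sum>is\<in>L. \<bar>pderivs is f (fst p) - pderivs is f (snd p)\<bar>)"
  have cK: "continuous_on K (pderivs is f)" if "is \<in> L" for "is"
  proof -
    have "continuous_on V (pderivs is f)" using fC that unfolding C_r_on_def L_def by simp
    then show ?thesis by (rule continuous_on_subset) (use s0 in \<open>simp add: K_def\<close>)
  qed
  have c1: "continuous_on (K \<times> K) (\<lambda>p. pderivs is f (fst p))" if "is \<in> L" for "is"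
    by (rule continuous_on_compose2[OF cK[OF that] continuous_on_fst[OF continuous_on_id]]) auto
  have c2: "continuous_on (K \<times> K) (\<lambda>p. pderivs is f (snd p))" if "is \<in> L" for "is"
    by (rule continuous_on_compose2[OF cK[OF that] continuous_on_snd[OF continuous_on_id]]) auto
  have cont: "continuous_on (K \<times> K) M"
    unfolding M_def by (intro continuous_intros c1 c2)
  have "uniformly_continuous_on (K \<times> K) M"
    by (rule compact_uniformly_continuous[OF cont]) (simp add: K_def compact_Times)
  then obtain d where d: "d > 0"
    "\<forall>p\<in>K \<times> K. \<forall>p'\<in>K \<times> K. dist p' p < d \<longrightarrow> dist (M p') (M p) < \<epsilon> * fact r"
  proof -
    have "\<epsilon> * fact r > 0" using eps by simp
    then show ?thesis using \<open>uniformly_continuous_on (K \<times> K) M\<close> unfolding uniformly_continuous_on_def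
      by (elim allE[where x="\<epsilon> * fact r"] impE) (auto intro: that)
  qed
  define s where "s = min s0 (d / 2)"
  have sK: "ball xb s \<subseteq> K" by (auto simp: s_def K_def)
  show ?thesis
  proof (intro exI[of _ s] conjI ballI)
    show "s > 0" using s0 d by (simp add: s_def)
    show "ball xb s \<subseteq> V" using sK s0 K_def by blast
    fix x z assume x: "x \<in> ball xb s" and z: "z \<in> ball xb s"
    define v where "v = x - z"
    have seg: "z + t *\<^sub>R v \<in> ball xb s" if "0 \<le> t" "t \<le> 1" for t
    proof -
      have "z + t *\<^sub>R v = (1 - t) *\<^sub>R z + t *\<^sub>R x" by (simp add: v_def algebra_simps)
      then show ?thesis using convexD_alt[OF convex_ball z x that] by simp
    qed
    have segV: "z + t *\<^sub>R v \<in> V" if "0 \<le> t" "t \<le> 1" for t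
    proof -
      have "z + t *\<^sub>R v \<in> ball xb s" using seg that by blast
      then have "z + t *\<^sub>R v \<in> K" using sK by blast
      then show ?thesis using s0(2) unfolding K_def by blast
    qed
    obtain t where t: "0 < t" "t < 1"
      and eq: "f (z + v) - taylor_poly r f z (z + v) = (Dj r f v (z + t *\<^sub>R v) - Dj r f v z) / fact r"
      using taylor_remainder[OF fC V(1) r segV] by blast
    have xi: "z + t *\<^sub>R v \<in> K" using seg[of t] t sK by auto
    have zK: "z \<in> K" using z sK by auto
    have "dist (z + t *\<^sub>R v, z) (z, z) = t * norm v" using t by (simp add: dist_Pair_Pair dist_norm)
    also have "\<dots> \<le> norm v" using t mult_right_mono[of t 1 "norm v"] by simp
    also have "\<dots> < d" proof -
      have "norm v \<le> dist x xb + dist z xb" using dist_triangle[of x z xb] by (simp add: v_def dist_norm norm_minus_commute)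
      then show ?thesis using x z by (simp add: s_def dist_commute)
    qed
    finally have a: "dist (z + t *\<^sub>R v, z) (z, z) < d" .
    have "dist (M (z + t *\<^sub>R v, z)) (M (z, z)) < \<epsilon> * fact r"
    proof -
      have "(z, z) \<in> K \<times> K" "(z + t *\<^sub>R v, z) \<in> K \<times> K" using xi zK by auto
      then show ?thesis using d(2) a by blast
    qed
    moreover have "M (z, z) = 0" by (simp add: M_def)
    moreover have "M (z + t *\<^sub>R v, z) \<ge> 0" unfolding M_def by (intro sum_nonneg) simp
    ultimately have Mb: "M (z + t *\<^sub>R v, z) \<le> \<epsilon> * fact r" by (simp add: dist_real_def)
    have "\<bar>f x - taylor_poly r f z x\<bar> = \<bar>Dj r f v (z + t *\<^sub>R v) - Dj r f v z\<bar> / fact r"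
      using eq by (simp add: v_def)
    also have "\<dots> \<le> M (z + t *\<^sub>R v, z) * norm v ^ r / fact r"
      using Dj_diff_bound[of r f v "z + t *\<^sub>R v" z]
      by (intro divide_right_mono) (simp_all add: M_def L_def)
    also have "\<dots> \<le> \<epsilon> * fact r * norm v ^ r / fact r"
      using Mb by (intro divide_right_mono mult_right_mono) simp_all
    also have "\<dots> = \<epsilon> * dist x z ^ r" by (simp add: v_def dist_norm)
    finally show "\<bar>f x - taylor_poly r f z x\<bar> \<le> \<epsilon> * dist x z ^ r" .
  qed
qed

lemma taylor_poly_self: "taylor_poly r g z z = g z"
proof -
  have Dz: "Dj j g 0 z / fact j = (if j = 0 then g z else 0)" for j
    by (cases j) (simp_all add: Dj_0 Dj_Suc)
  have "taylor_poly r g z z = taylor_poly r g z (z + 0)" by simp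
  also have "\<dots> = (\<Sum>j\<le>r. (if j = 0 then g z else 0))" unfolding taylor_poly_Dj Dz ..
  also have "\<dots> = g z" by simp
  finally show ?thesis .
qed

lemma root_deriv_abs:
  assumes r: "r \<ge> 1" and t: "t \<noteq> 0"
  shows "\<exists>D. DERIV (root r) t :> D \<and> \<bar>D\<bar> = inverse (real r * \<bar>root r t\<bar> ^ (r - 1))"
proof -
  have r0: "0 < r" using r by simp
  have a: "\<bar>inverse (real r * root r t ^ (r - Suc 0))\<bar> = inverse (real r * \<bar>root r t\<bar> ^ (r - 1))"
    by (simp add: abs_mult power_abs)
  show ?thesis
  proof (cases "even r")
    case True
    show ?thesis
    proof (cases "0 < t")
      case True
      show ?thesis
        by (rule exI[of _ "inverse (real r * root r t ^ (r - Suc 0))"], rule conjI,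
            rule DERIV_real_root_generic[OF r0 t]) (use True \<open>even r\<close> a in auto)
    next
      case False
      then have "t < 0" using t by simp
      show ?thesis
        by (rule exI[of _ "- inverse (real r * root r t ^ (r - Suc 0))"], rule conjI,
            rule DERIV_real_root_generic[OF r0 t]) (use \<open>t < 0\<close> \<open>even r\<close> a in auto)
    qed
  next
    case False
    show ?thesis
      by (rule exI[of _ "inverse (real r * root r t ^ (r - Suc 0))"], rule conjI,
          rule DERIV_real_root_generic[OF r0 t]) (use False a in auto)
  qed
qed

lemma grad_phi:
  fixes f :: "real^'n \<Rightarrow> real"
  assumes r: "r \<ge> 1" and c: "c > 0" and w: "w > 0"
    and der: "(f has_derivative (\<lambda>h. grad f y \<bullet> h)) (at y)"
    and dy: "dy > 0" and ne: "f y \<noteq> f xb" and hn: "\<bar>f y - f xb\<bar> \<le> w * dy ^ r"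
    and gr: "c * dy ^ (r - 1) \<le> norm (grad f y)"
  shows "\<exists>G. ((\<lambda>u. root r (f u - f xb)) has_derivative (\<lambda>h. G \<bullet> h)) (at y)
            \<and> c / (real r * root r w ^ (r - 1)) \<le> norm G"
proof -
  define t where "t = f y - f xb"
  have t0: "t \<noteq> 0" using ne by (simp add: t_def)
  obtain D where D: "DERIV (root r) t :> D" and aD: "\<bar>D\<bar> = inverse (real r * \<bar>root r t\<bar> ^ (r - 1))"
    using root_deriv_abs[OF r t0] by blast
  have d1: "((\<lambda>u. f u - f xb) has_derivative (\<lambda>h. grad f y \<bullet> h)) (at y)"
    using has_derivative_diff[OF der has_derivative_const[of "f xb"]] by simp
  have D': "(root r has_derivative (*) D) (at (f y - f xb))"
    using D unfolding has_field_derivative_def t_def .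
  have hd: "((\<lambda>u. root r (f u - f xb)) has_derivative (\<lambda>h. (D *\<^sub>R grad f y) \<bullet> h)) (at y)"
    unfolding inner_scaleR_left by (rule has_derivative_compose[OF d1 D'])
  have r0: "0 < r" using r by simp
  have rw: "root r w > 0" using w r0 by simp
  have "\<bar>root r t\<bar> = root r \<bar>t\<bar>" using real_root_abs[OF r0] by simp
  also have "\<dots> \<le> root r (w * dy ^ r)" by (rule real_root_le_mono[OF r0]) (use hn in \<open>simp add: t_def\<close>)
  also have "\<dots> = root r w * dy" using dy r0 by (simp only: real_root_mult real_root_power_cancel less_imp_le)
  finally have rt: "\<bar>root r t\<bar> \<le> root r w * dy" .
  have rtpos: "\<bar>root r t\<bar> > 0" using t0 r0 by simp
  have "\<bar>root r t\<bar> ^ (r - 1) \<le> (root r w * dy) ^ (r - 1)"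
    using rt rtpos by (intro power_mono) simp_all
  also have "\<dots> = root r w ^ (r - 1) * dy ^ (r - 1)" by (simp add: power_mult_distrib)
  finally have rt2: "\<bar>root r t\<bar> ^ (r - 1) \<le> root r w ^ (r - 1) * dy ^ (r - 1)" .
  define a where "a = root r w ^ (r - 1)"
  define b where "b = dy ^ (r - 1)"
  define q where "q = \<bar>root r t\<bar> ^ (r - 1)"
  have apos: "a > 0" using rw by (simp add: a_def)
  have bpos: "b > 0" using dy by (simp add: b_def)
  have qpos: "q > 0" using rtpos by (simp add: q_def)
  have qb: "q \<le> a * b" using rt2 by (simp add: q_def a_def b_def)
  have gr': "c * b \<le> norm (grad f y)" using gr by (simp add: b_def)
  have rpos: "real r > 0" using r0 by simp
  have "c / (real r * a) = c * b / (real r * (a * b))"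
    using bpos by simp
  also have "\<dots> \<le> norm (grad f y) / (real r * (a * b))"
    using gr' apos bpos rpos by (intro divide_right_mono) simp_all
  also have "\<dots> \<le> norm (grad f y) / (real r * q)"
    using qpos qb rpos by (intro divide_left_mono) (simp_all add: mult_left_mono)
  also have "\<dots> = norm (D *\<^sub>R grad f y)" using aD by (simp add: q_def divide_inverse mult.commute)
  finally have "c / (real r * root r w ^ (r - 1)) \<le> norm (D *\<^sub>R grad f y)" by (simp add: a_def)
  with hd show ?thesis by blast
qed

definition mconst :: "real \<Rightarrow> nat \<Rightarrow> real \<Rightarrow> real" where
  "mconst c r w = c / (real r * root r w ^ (r - 1))"

lemma mconst_pos: "c > 0 \<Longrightarrow> r \<ge> 1 \<Longrightarrow> w > 0 \<Longrightarrow> mconst c r w > 0"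
  unfolding mconst_def by simp

lemma descent:
  fixes f :: "real^'n \<Rightarrow> real"
  assumes r: "r \<ge> 1" and c: "c > 0" and w: "w > 0"
    and der: "\<forall>y\<in>ball xb R. (f has_derivative (\<lambda>h. grad f y \<bullet> h)) (at y)"
    and gro: "\<forall>y\<in>ball xb R. \<bar>f y - f xb\<bar> \<le> w * infdist y \<Sigma> ^ r \<longrightarrow> c * infdist y \<Sigma> ^ (r - 1) \<le> norm (grad f y)"
    and rho: "\<rho> > 0" and sub: "cball x \<rho> \<subseteq> ball xb R"
  shows "\<exists>y\<in>cball x \<rho>. (\<forall>u\<in>cball x \<rho>. root r (f y - f xb) + mconst c r w / 2 * norm (y - x)
                                    \<le> root r (f u - f xb) + mconst c r w / 2 * norm (u - x))
          \<and> \<not> (dist y x < \<rho> \<and> infdist y \<Sigma> > 0 \<and> f y \<noteq> f xb \<and> \<bar>f y - f xb\<bar> \<le> w * infdist y \<Sigma> ^ r)"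
proof -
  define m where "m = mconst c r w"
  have m: "m > 0" using mconst_pos[OF c r w] by (simp add: m_def)
  define \<psi> where "\<psi> = (\<lambda>u. root r (f u - f xb) + m / 2 * norm (u - x))"
  have fc: "continuous_on (ball xb R) f"
    by (rule continuous_at_imp_continuous_on) (use der has_derivative_continuous in blast)
  then have fc2: "continuous_on (cball x \<rho>) f" using sub continuous_on_subset by blast
  have "continuous_on (cball x \<rho>) \<psi>"
    unfolding \<psi>_def by (intro continuous_intros fc2)
  then obtain y where y: "y \<in> cball x \<rho>" and ymin: "\<forall>u\<in>cball x \<rho>. \<psi> y \<le> \<psi> u"
    using continuous_attains_inf[OF compact_cball, of x \<rho> \<psi>] rho by fastforce
  have "\<not> (dist y x < \<rho> \<and> infdist y \<Sigma> > 0 \<and> f y \<noteq> f xb \<and> \<bar>f y - f xb\<bar> \<le> w * infdist y \<Sigma> ^ r)"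
  proof
    assume A: "dist y x < \<rho> \<and> infdist y \<Sigma> > 0 \<and> f y \<noteq> f xb \<and> \<bar>f y - f xb\<bar> \<le> w * infdist y \<Sigma> ^ r"
    have yR: "y \<in> ball xb R" using y sub by blast
    obtain G where G: "((\<lambda>u. root r (f u - f xb)) has_derivative (\<lambda>h. G \<bullet> h)) (at y)"
      and Gm: "m \<le> norm G"
      using grad_phi[OF r c w der[rule_format, OF yR], of "infdist y \<Sigma>" xb] A gro yR
      unfolding m_def mconst_def by blast
    have "norm G \<le> m / 2"
    proof (rule min_grad_bound[OF G, of "\<rho> - dist y x" "m / 2" x])
      show "\<rho> - dist y x > 0" using A by simp
      show "m / 2 \<ge> 0" using m by simp
      show "\<forall>u\<in>ball y (\<rho> - dist y x). root r (f y - f xb) + m / 2 * norm (y - x)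
              \<le> root r (f u - f xb) + m / 2 * norm (u - x)"
      proof
        fix u assume "u \<in> ball y (\<rho> - dist y x)"
        then have "u \<in> cball x \<rho>" using dist_triangle[of x u y]
          by (simp add: dist_commute)
        then show "root r (f y - f xb) + m / 2 * norm (y - x) \<le> root r (f u - f xb) + m / 2 * norm (u - x)"
          using ymin by (simp add: \<psi>_def)
      qed
    qed
    then show False using Gm m by simp
  qed
  then show ?thesis using y ymin unfolding \<psi>_def m_def by blast
qed

lemma infdist_le_xb: "infdist xb S = 0 \<Longrightarrow> infdist x S \<le> dist x xb"
  using infdist_triangle[of x S xb] by simp

lemma lemmaA:
  fixes f :: "real^'n \<Rightarrow> real"
  assumes r: "r \<ge> 1" and c: "c > 0" and w: "w > 0" and R: "R > 0"
    and xs: "infdist xb \<Sigma> = 0"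
    and der: "\<forall>y\<in>ball xb R. (f has_derivative (\<lambda>h. grad f y \<bullet> h)) (at y)"
    and gro: "\<forall>y\<in>ball xb R. \<bar>f y - f xb\<bar> \<le> w * infdist y \<Sigma> ^ r \<longrightarrow> c * infdist y \<Sigma> ^ (r - 1) \<le> norm (grad f y)"
    and lm: "\<forall>u\<in>ball xb R. f xb \<le> f u"
  shows "\<exists>\<kappa>>0. \<forall>x\<in>ball xb (R / 4). \<kappa> * infdist x \<Sigma> ^ r \<le> f x - f xb"
proof -
  define m where "m = mconst c r w"
  have m: "m > 0" using mconst_pos[OF c r w] by (simp add: m_def)
  have r0: "0 < r" using r by simp
  have rw: "root r w > 0" using w r0 by simp
  define k where "k = min (m / 4) (root r w / 2)"
  have k: "k > 0" using m rw by (simp add: k_def)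
  have k2: "(2 * k) ^ r \<le> w"
  proof -
    have "(2 * k) ^ r \<le> root r w ^ r" using k by (intro power_mono) (simp_all add: k_def)
    also have "\<dots> = w" using w r0 by simp
    finally show ?thesis .
  qed
  show ?thesis
  proof (intro exI[of _ "k ^ r"] conjI ballI)
    show "k ^ r > 0" using k by simp
    fix x assume x: "x \<in> ball xb (R / 4)"
    define d where "d = infdist x \<Sigma>"
    have dle: "d \<le> dist x xb" using infdist_le_xb[OF xs] by (simp add: d_def)
    have d0: "d \<ge> 0" by (simp add: d_def infdist_nonneg)
    show "k ^ r * infdist x \<Sigma> ^ r \<le> f x - f xb"
    proof (rule ccontr)
      assume "\<not> k ^ r * infdist x \<Sigma> ^ r \<le> f x - f xb"
      then have lt: "f x - f xb < k ^ r * d ^ r" by (simp add: d_def)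
      have xR: "x \<in> ball xb R" using x R by (simp add: dist_commute)
      have fx0: "f x - f xb \<ge> 0" using lm xR by simp
      have dpos: "d > 0"
      proof (rule ccontr)
        assume "\<not> d > 0"
        then have "d = 0" using d0 by simp
        then show False using lt fx0 r0 by (simp add: zero_power)
      qed
      have phx: "root r (f x - f xb) < k * d"
      proof -
        have "root r (f x - f xb) < root r ((k * d) ^ r)"
          using lt r0 by (simp add: power_mult_distrib)
        also have "\<dots> = k * d" using k dpos r0 by (simp add: real_root_power_cancel)
        finally show ?thesis .
      qed
      define \<rho> where "\<rho> = d / 2"
      have rho: "\<rho> > 0" using dpos by (simp add: \<rho>_def)
      have sub: "cball x \<rho> \<subseteq> ball xb R"
      proof
        fix u assume "u \<in> cball x \<rho>"
        then have "dist x u \<le> d / 2" by (simp add: \<rho>_def)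
        then have a1: "dist u x \<le> d / 2" by (simp add: dist_commute)
        have a2: "dist x xb < R / 4" using x by (simp add: dist_commute)
        have "dist u xb < R" using dist_triangle[of u xb x] a1 a2 dle zero_le_dist[of x xb] by linarith
        then show "u \<in> ball xb R" by (simp add: dist_commute)
      qed
      obtain y where y: "y \<in> cball x \<rho>"
        and ymin: "\<forall>u\<in>cball x \<rho>. root r (f y - f xb) + m / 2 * norm (y - x)
                                    \<le> root r (f u - f xb) + m / 2 * norm (u - x)"
        and nd: "\<not> (dist y x < \<rho> \<and> infdist y \<Sigma> > 0 \<and> f y \<noteq> f xb \<and> \<bar>f y - f xb\<bar> \<le> w * infdist y \<Sigma> ^ r)"
        using descent[OF r c w der gro rho sub] unfolding m_def by blast
      have yR: "y \<in> ball xb R" using y sub by blast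
      have psi: "root r (f y - f xb) + m / 2 * norm (y - x) < k * d"
      proof -
        have "x \<in> cball x \<rho>" using rho by simp
        then have "root r (f y - f xb) + m / 2 * norm (y - x) \<le> root r (f x - f xb) + m / 2 * norm (x - x)"
          using ymin by blast
        then show ?thesis using phx by simp
      qed
      have fy0: "f y - f xb \<ge> 0" using lm yR by simp
      have phy0: "root r (f y - f xb) \<ge> 0" using fy0 by (rule real_root_ge_zero)
      have yint: "dist y x < \<rho>"
      proof (rule ccontr)
        assume "\<not> dist y x < \<rho>"
        then have "norm (y - x) \<ge> \<rho>" by (simp add: dist_norm)
        then have "m / 2 * norm (y - x) \<ge> m / 2 * \<rho>" using m by simp
        moreover have "m / 2 * \<rho> = m / 4 * d" by (simp add: \<rho>_def)
        moreover have "k * d \<le> m / 4 * d" using dpos by (simp add: k_def)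
        ultimately show False using psi phy0 by linarith
      qed
      have dy: "infdist y \<Sigma> \<ge> d / 2"
        using infdist_triangle[of x \<Sigma> y] yint by (simp add: d_def \<rho>_def dist_commute)
      have dypos: "infdist y \<Sigma> > 0" using dy dpos by simp
      have fne: "f y \<noteq> f xb"
      proof
        assume eq: "f y = f xb"
        have "norm (grad f y) \<le> 0"
        proof (rule min_grad_bound[of f "grad f y" y "R - dist y xb" 0 x])
          show "(f has_derivative (\<lambda>h. grad f y \<bullet> h)) (at y)" using der yR by blast
          show "R - dist y xb > 0" using yR by (simp add: dist_commute)
          show "\<forall>u\<in>ball y (R - dist y xb). f y + 0 * norm (y - x) \<le> f u + 0 * norm (u - x)"
          proof
            fix u assume "u \<in> ball y (R - dist y xb)"
            then have "u \<in> ball xb R" using dist_triangle[of xb u y] by (simp add: dist_commute)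
            then show "f y + 0 * norm (y - x) \<le> f u + 0 * norm (u - x)" using lm eq by simp
          qed
        qed simp
        moreover have "c * infdist y \<Sigma> ^ (r - 1) \<le> norm (grad f y)"
          using gro yR eq dypos w by simp
        moreover have "c * infdist y \<Sigma> ^ (r - 1) > 0" using c dypos by simp
        ultimately show False by simp
      qed
      have "root r (f y - f xb) < 2 * k * infdist y \<Sigma>"
      proof -
        have "root r (f y - f xb) \<le> root r (f y - f xb) + m / 2 * norm (y - x)" using m by simp
        also have "\<dots> < k * d" by (rule psi)
        also have "\<dots> \<le> 2 * k * infdist y \<Sigma>" using dy k by (simp add: mult_left_mono)
        finally show ?thesis .
      qed
      then have "root r (f y - f xb) ^ r < (2 * k * infdist y \<Sigma>) ^ r"
        using phy0 r0 by (intro power_strict_mono) simp_all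
      moreover have "root r (f y - f xb) ^ r = f y - f xb" using fy0 r0 by (simp add: real_root_pow_pos2)
      moreover have "(2 * k * infdist y \<Sigma>) ^ r \<le> w * infdist y \<Sigma> ^ r"
        using k2 dypos by (simp add: power_mult_distrib mult_right_mono)
      ultimately have "\<bar>f y - f xb\<bar> \<le> w * infdist y \<Sigma> ^ r" using fy0 by simp
      then show False using nd yint dypos fne by blast
    qed
  qed
qed

lemma root_neg_iff: "0 < n \<Longrightarrow> root n t < 0 \<longleftrightarrow> t < 0"
  using real_root_less_iff[of n t 0] by simp

lemma root_abs_pow: "0 < n \<Longrightarrow> \<bar>root n t\<bar> ^ n = \<bar>t\<bar>"
  using real_root_abs[of n t] real_root_pow_pos2[of n "\<bar>t\<bar>"] by simp

lemma lemmaB: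
  fixes f :: "real^'n \<Rightarrow> real"
  assumes r: "r \<ge> 1" and c: "c > 0" and w: "w > 0" and R: "R > 0"
    and xs: "infdist xb \<Sigma> = 0"
    and der: "\<forall>y\<in>ball xb R. (f has_derivative (\<lambda>h. grad f y \<bullet> h)) (at y)"
    and gro: "\<forall>y\<in>ball xb R. \<bar>f y - f xb\<bar> \<le> w * infdist y \<Sigma> ^ r \<longrightarrow> c * infdist y \<Sigma> ^ (r - 1) \<le> norm (grad f y)"
  shows "\<exists>\<kappa>>0. \<forall>x\<in>ball xb (R / 4). f x < f xb \<longrightarrow>
           (\<exists>y. dist y x \<le> infdist x \<Sigma> / 2 \<and> f y < f xb \<and> f y - f xb \<le> - \<kappa> * infdist y \<Sigma> ^ r)"
proof -
  define m where "m = mconst c r w"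
  have m: "m > 0" using mconst_pos[OF c r w] by (simp add: m_def)
  have r0: "0 < r" using r by simp
  define \<kappa> where "\<kappa> = min w ((m / 6) ^ r)"
  have \<kappa>: "\<kappa> > 0" using w m by (simp add: \<kappa>_def)
  show ?thesis
  proof (intro exI[of _ \<kappa>] conjI ballI impI)
    show "\<kappa> > 0" by (rule \<kappa>)
    fix x assume x: "x \<in> ball xb (R / 4)" and fx: "f x < f xb"
    define d where "d = infdist x \<Sigma>"
    have dle: "d \<le> dist x xb" using infdist_le_xb[OF xs] by (simp add: d_def)
    have d0: "d \<ge> 0" by (simp add: d_def infdist_nonneg)
    show "\<exists>y. dist y x \<le> infdist x \<Sigma> / 2 \<and> f y < f xb \<and> f y - f xb \<le> - \<kappa> * infdist y \<Sigma> ^ r"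
    proof (cases "d = 0")
      case True
      then show ?thesis using fx r0 by (intro exI[of _ x]) (simp add: d_def zero_power)
    next
      case False
      then have dpos: "d > 0" using d0 by simp
      define \<rho> where "\<rho> = d / 2"
      have rho: "\<rho> > 0" using dpos by (simp add: \<rho>_def)
      have sub: "cball x \<rho> \<subseteq> ball xb R"
      proof
        fix u assume "u \<in> cball x \<rho>"
        then have "dist x u \<le> d / 2" by (simp add: \<rho>_def)
        then have a1: "dist u x \<le> d / 2" by (simp add: dist_commute)
        have a2: "dist x xb < R / 4" using x by (simp add: dist_commute)
        have "dist u xb < R" using dist_triangle[of u xb x] a1 a2 dle zero_le_dist[of x xb] by linarith
        then show "u \<in> ball xb R" by (simp add: dist_commute)
      qed
      obtain y where y: "y \<in> cball x \<rho>"
        and ymin: "\<forall>u\<in>cball x \<rho>. root r (f y - f xb) + m / 2 * norm (y - x)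
                                    \<le> root r (f u - f xb) + m / 2 * norm (u - x)"
        and nd: "\<not> (dist y x < \<rho> \<and> infdist y \<Sigma> > 0 \<and> f y \<noteq> f xb \<and> \<bar>f y - f xb\<bar> \<le> w * infdist y \<Sigma> ^ r)"
        using descent[OF r c w der gro rho sub] unfolding m_def by blast
      have phx: "root r (f x - f xb) < 0" using fx r0 by (simp add: root_neg_iff)
      have psi: "root r (f y - f xb) + m / 2 * norm (y - x) \<le> root r (f x - f xb)"
      proof -
        have "x \<in> cball x \<rho>" using rho by simp
        then show ?thesis using ymin by fastforce
      qed
      have "m / 2 * norm (y - x) \<ge> 0" using m by simp
      then have phy: "root r (f y - f xb) < 0" using psi phx by linarith
      then have fy: "f y < f xb" using r0 by (simp add: root_neg_iff)
      have ydist: "dist y x \<le> \<rho>" using y by (simp add: dist_commute)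
      have dy1: "infdist y \<Sigma> \<ge> d / 2"
        using infdist_triangle[of x \<Sigma> y] ydist by (simp add: d_def \<rho>_def dist_commute)
      have dy2: "infdist y \<Sigma> \<le> 3 / 2 * d"
        using infdist_triangle[of y \<Sigma> x] ydist by (simp add: d_def \<rho>_def dist_commute)
      have dypos: "infdist y \<Sigma> > 0" using dy1 dpos by simp
      have main: "f y - f xb \<le> - \<kappa> * infdist y \<Sigma> ^ r"
      proof (cases "\<bar>f y - f xb\<bar> \<le> w * infdist y \<Sigma> ^ r")
        case False
        then have "f y - f xb < - w * infdist y \<Sigma> ^ r" using fy by simp
        moreover have "\<kappa> * infdist y \<Sigma> ^ r \<le> w * infdist y \<Sigma> ^ r"
          using dypos by (intro mult_right_mono) (simp_all add: \<kappa>_def)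
        ultimately show ?thesis by simp
      next
        case True
        have fne: "f y \<noteq> f xb" using fy by simp
        have "\<not> dist y x < \<rho>" using nd True dypos fne by blast
        then have bd: "dist y x = \<rho>" using ydist by linarith
        then have "root r (f y - f xb) \<le> root r (f x - f xb) - m / 2 * \<rho>"
          using psi by (simp add: dist_norm)
        also have "\<dots> < - (m / 4) * d" using phx by (simp add: \<rho>_def)
        also have "\<dots> \<le> - (m / 6) * infdist y \<Sigma>" using dy2 m by simp
        finally have "m / 6 * infdist y \<Sigma> < \<bar>root r (f y - f xb)\<bar>" using phy by simp
        then have "(m / 6 * infdist y \<Sigma>) ^ r \<le> \<bar>root r (f y - f xb)\<bar> ^ r"
          using m dypos by (intro power_mono) simp_all
        then have "(m / 6) ^ r * infdist y \<Sigma> ^ r \<le> \<bar>f y - f xb\<bar>"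
          using r0 by (simp add: root_abs_pow power_mult_distrib[symmetric])
        moreover have "\<kappa> * infdist y \<Sigma> ^ r \<le> (m / 6) ^ r * infdist y \<Sigma> ^ r"
          using dypos by (intro mult_right_mono) (simp_all add: \<kappa>_def)
        ultimately show ?thesis using fy by simp
      qed
      show ?thesis using ydist fy main by (intro exI[of _ y]) (simp add: \<rho>_def d_def)
    qed
  qed
qed

lemma infdist_approx:
  assumes "a \<in> A" "\<eta> > 0"
  shows "\<exists>z\<in>A. dist x z < infdist x A + \<eta>"
proof -
  have ne: "A \<noteq> {}" using assms by auto
  have bdd: "bdd_below ((\<lambda>a. dist x a) ` A)" by (rule bdd_belowI[of _ 0]) auto
  have "(INF a\<in>A. dist x a) < infdist x A + \<eta>" using assms(2) infdist_notempty[OF ne] by simp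
  then show ?thesis using cINF_less_iff[OF ne bdd] by blast
qed

lemma le_from_right:
  fixes a d \<epsilon> :: real
  assumes "\<forall>\<eta>>0. \<eta> < \<eta>0 \<longrightarrow> a \<le> \<epsilon> * (d + \<eta>) ^ r" and "\<eta>0 > 0"
  shows "a \<le> \<epsilon> * d ^ r"
proof -
  have lim: "((\<lambda>\<eta>. \<epsilon> * (d + \<eta>) ^ r) \<longlongrightarrow> \<epsilon> * (d + 0) ^ r) (at_right 0)"
    by (intro tendsto_intros)
  have ev: "eventually (\<lambda>\<eta>. a \<le> \<epsilon> * (d + \<eta>) ^ r) (at_right (0::real))"
    unfolding eventually_at_right_field using assms by blast
  have "a \<le> \<epsilon> * (d + 0) ^ r"
    by (rule tendsto_le[OF _ lim tendsto_const ev]) simp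
  then show ?thesis by simp
qed

theorem corollary3p4:
  fixes f :: "real^'n \<Rightarrow> real" and xb :: "real^'n" and \<Sigma> :: "(real^'n) set"
    and V :: "(real^'n) set" and r :: nat and c \<delta> w :: real
  assumes r: "r \<ge> 1"
    and V: "open V" "xb \<in> V"
    and fC: "C_r_on r V f"
    and lc: "locally_closed_at \<Sigma> xb"
    and crit: "{x \<in> V. grad f x = 0} \<subseteq> \<Sigma>"
    and pos: "c > 0" "\<delta> > 0" "w > 0"
    and grow: "\<forall>x \<in> horn_nbhd r \<Sigma> f xb w \<inter> cball xb \<delta>.
                 norm (grad f x) \<ge> c * infdist x \<Sigma> ^ (r - 1)"
    and tay: "\<forall>z1 \<in> \<Sigma> \<inter> cball xb \<delta>. \<forall>z2 \<in> \<Sigma> \<inter> cball xb \<delta>.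
                 taylor_poly r f z1 = taylor_poly r f z2"
  shows "(local_min_at f xb \<longleftrightarrow> local_min_at (taylor_poly r f xb) xb)
       \<and> (local_min_at f xb \<longrightarrow>
            (\<exists>\<epsilon>>0. \<forall>h :: real^'n \<Rightarrow> real.
               (\<exists>\<rho>>0. \<forall>x \<in> cball xb \<rho>. \<bar>h x - h xb\<bar> \<le> \<epsilon> * infdist x \<Sigma> ^ r)
               \<longrightarrow> local_min_at (\<lambda>x. f x + h x) xb))"
proof -
  define P where "P = taylor_poly r f xb"
  have Pxb: "P xb = f xb" by (simp add: P_def taylor_poly_self)
  have r0: "0 < r" using r by simp
  have fder: "(f has_derivative (\<lambda>h. grad f y \<bullet> h)) (at y)" if "y \<in> V" for y
    using Cr_has_derivative[OF fC V(1) that, of "[]"] r0 by simp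
  show ?thesis
  proof (cases "grad f xb = 0")
    case False
    have nf: "\<not> local_min_at f xb"
    proof
      assume "local_min_at f xb"
      then obtain e where e: "e > 0" "\<forall>y\<in>ball xb e. f xb \<le> f y" unfolding local_min_at_def by blast
      have "norm (grad f xb) \<le> 0"
        by (rule min_grad_bound[OF fder[OF V(2)] e(1), of 0 xb]) (use e in auto)
      then show False using False by simp
    qed
    have nP: "\<not> local_min_at P xb"
    proof
      assume "local_min_at P xb"
      then obtain e where e: "e > 0" "\<forall>y\<in>ball xb e. P xb \<le> P y" unfolding local_min_at_def by blast
      define \<epsilon> where "\<epsilon> = norm (grad f xb) / 2"
      have eps: "\<epsilon> > 0" using False by (simp add: \<epsilon>_def)
      obtain s where s: "s > 0" "ball xb s \<subseteq> V"
        "\<forall>x\<in>ball xb s. \<forall>z\<in>ball xb s. \<bar>f x - taylor_poly r f z x\<bar> \<le> \<epsilon> * dist x z ^ r"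
        using taylor_uniform[OF fC V r eps] by blast
      define e2 where "e2 = min (min e s) 1"
      have e2: "e2 > 0" using e s by (simp add: e2_def)
      have "norm (grad f xb) \<le> \<epsilon>"
      proof (rule min_grad_bound[OF fder[OF V(2)] e2, of \<epsilon> xb])
        show "\<epsilon> \<ge> 0" using eps by simp
        show "\<forall>u\<in>ball xb e2. f xb + \<epsilon> * norm (xb - xb) \<le> f u + \<epsilon> * norm (u - xb)"
        proof
          fix u assume u: "u \<in> ball xb e2"
          have uin: "u \<in> ball xb s" "u \<in> ball xb e" using u by (auto simp: e2_def)
          have "\<bar>f u - P u\<bar> \<le> \<epsilon> * dist u xb ^ r"
            using s(3) uin(1) s(1) by (simp add: P_def)
          moreover have "dist u xb ^ r \<le> dist u xb"
            using power_decreasing[of 1 r "dist u xb"] r u by (simp add: e2_def dist_commute)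
          moreover have "P xb \<le> P u" using e(2) uin(2) by blast
          moreover have "\<epsilon> * dist u xb ^ r \<le> \<epsilon> * dist u xb"
            using calculation(2) eps by (intro mult_left_mono) simp_all
          ultimately have "f xb \<le> f u + \<epsilon> * dist u xb"
            using Pxb by linarith
          then show "f xb + \<epsilon> * norm (xb - xb) \<le> f u + \<epsilon> * norm (u - xb)"
            by (simp add: dist_norm)
        qed
      qed
      then show False using False by (simp add: \<epsilon>_def)
    qed
    show ?thesis using nf nP by (simp add: P_def)
  next
    case True
    then have xbS: "xb \<in> \<Sigma>" using crit V(2) by blast
    have xs: "infdist xb \<Sigma> = 0" using xbS by simp
    obtain R0 where R0: "R0 > 0" "ball xb R0 \<subseteq> V" using V open_contains_ball by blast
    define R where "R = min R0 \<delta>"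
    have R: "R > 0" "ball xb R \<subseteq> V" "ball xb R \<subseteq> cball xb \<delta>" using R0 pos by (auto simp: R_def)
    have der: "\<forall>y\<in>ball xb R. (f has_derivative (\<lambda>h. grad f y \<bullet> h)) (at y)"
      using fder R(2) by blast
    have gro: "\<forall>y\<in>ball xb R. \<bar>f y - f xb\<bar> \<le> w * infdist y \<Sigma> ^ r \<longrightarrow> c * infdist y \<Sigma> ^ (r - 1) \<le> norm (grad f y)"
    proof (intro ballI impI)
      fix y assume y: "y \<in> ball xb R" and hn: "\<bar>f y - f xb\<bar> \<le> w * infdist y \<Sigma> ^ r"
      have "y \<in> horn_nbhd r \<Sigma> f xb w \<inter> cball xb \<delta>" using y hn R(3) by (auto simp: horn_nbhd_def)
      then show "c * infdist y \<Sigma> ^ (r - 1) \<le> norm (grad f y)" using grow by blast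
    qed
    have TE: "\<exists>s>0. \<forall>x\<in>ball xb s. \<bar>f x - P x\<bar> \<le> \<epsilon> * infdist x \<Sigma> ^ r" if eps: "\<epsilon> > 0" for \<epsilon>
    proof -
      obtain s1 where s1: "s1 > 0" "ball xb s1 \<subseteq> V"
        "\<forall>x\<in>ball xb s1. \<forall>z\<in>ball xb s1. \<bar>f x - taylor_poly r f z x\<bar> \<le> \<epsilon> * dist x z ^ r"
        using taylor_uniform[OF fC V r eps] by blast
      define s where "s = min s1 \<delta> / 2"
      have s: "s > 0" using s1 pos by (simp add: s_def)
      show ?thesis
      proof (intro exI[of _ s] conjI ballI)
        show "s > 0" by (rule s)
        fix x assume x: "x \<in> ball xb s"
        define d where "d = infdist x \<Sigma>"
        have dle: "d \<le> dist x xb" using infdist_le_xb[OF xs] by (simp add: d_def)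
        have xd: "dist x xb < s" using x by (simp add: dist_commute)
        have "\<forall>\<eta>>0. \<eta> < s - dist x xb \<longrightarrow> \<bar>f x - P x\<bar> \<le> \<epsilon> * (d + \<eta>) ^ r"
        proof (intro allI impI)
          fix \<eta> :: real assume eta: "\<eta> > 0" "\<eta> < s - dist x xb"
          obtain z where z: "z \<in> \<Sigma>" "dist x z < d + \<eta>"
            using infdist_approx[OF xbS eta(1)] by (auto simp: d_def)
          have "dist z xb \<le> dist z x + dist x xb" by (rule dist_triangle)
          then have zx: "dist z xb < 2 * s" using z(2) dle eta xd by (simp add: dist_commute)
          have ss0: "s \<le> s1 / 2" "s \<le> \<delta> / 2" by (simp_all add: s_def)
          have zb: "z \<in> ball xb s1" "z \<in> cball xb \<delta>" using zx ss0
            by (auto simp: dist_commute)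
          have ss: "s \<le> s1 / 2" "s \<le> \<delta> / 2" by (simp_all add: s_def)
          have "dist x xb < s1" using xd ss zero_le_dist[of x xb] by linarith
          then have xb1: "x \<in> ball xb s1" by (simp add: dist_commute)
          have Tz: "taylor_poly r f z = P"
          proof -
            have m1: "z \<in> \<Sigma> \<inter> cball xb \<delta>" using zb(2) z(1) by simp
            have m2: "xb \<in> \<Sigma> \<inter> cball xb \<delta>" using xbS pos(2) by simp
            show ?thesis unfolding P_def using tay m1 m2 by blast
          qed
          have "\<bar>f x - P x\<bar> \<le> \<epsilon> * dist x z ^ r" using s1(3) xb1 zb(1) Tz by blast
          also have "\<dots> \<le> \<epsilon> * (d + \<eta>) ^ r"
            using z(2) eps by (intro mult_left_mono power_mono) simp_all
          finally show "\<bar>f x - P x\<bar> \<le> \<epsilon> * (d + \<eta>) ^ r" .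
        qed
        then show "\<bar>f x - P x\<bar> \<le> \<epsilon> * infdist x \<Sigma> ^ r"
          using le_from_right[of "s - dist x xb"] xd by (simp add: d_def)
      qed
    qed
    have dle: "infdist x \<Sigma> \<le> dist x xb" for x using infdist_le_xb[OF xs] .
    have Aside: "\<exists>\<kappa>>0. \<exists>\<eta>>0. \<forall>x\<in>ball xb \<eta>. \<kappa> * infdist x \<Sigma> ^ r \<le> f x - f xb"
      if lm: "local_min_at f xb"
    proof -
      obtain e where e: "e > 0" "\<forall>y\<in>ball xb e. f xb \<le> f y" using lm unfolding local_min_at_def by blast
      define R' where "R' = min R e"
      have R': "R' > 0" using R e by (simp add: R'_def)
      have sub: "ball xb R' \<subseteq> ball xb R" "ball xb R' \<subseteq> ball xb e" by (auto simp: R'_def)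
      have der': "\<forall>y\<in>ball xb R'. (f has_derivative (\<lambda>h. grad f y \<bullet> h)) (at y)" using der sub by blast
      have gro': "\<forall>y\<in>ball xb R'. \<bar>f y - f xb\<bar> \<le> w * infdist y \<Sigma> ^ r \<longrightarrow> c * infdist y \<Sigma> ^ (r - 1) \<le> norm (grad f y)"
        using gro sub by blast
      have lm': "\<forall>u\<in>ball xb R'. f xb \<le> f u" using e(2) sub by blast
      obtain \<kappa> where "\<kappa> > 0" "\<forall>x\<in>ball xb (R' / 4). \<kappa> * infdist x \<Sigma> ^ r \<le> f x - f xb"
        using lemmaA[OF r pos(1) pos(3) R' xs der' gro' lm'] by blast
      then show ?thesis using R' by (intro exI[of _ \<kappa>] conjI exI[of _ "R' / 4"]) simp_all
    qed
    have fwd: "local_min_at P xb" if lm: "local_min_at f xb"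
    proof -
      obtain \<kappa> \<eta> where k: "\<kappa> > 0" "\<eta> > 0" "\<forall>x\<in>ball xb \<eta>. \<kappa> * infdist x \<Sigma> ^ r \<le> f x - f xb"
        using Aside[OF lm] by blast
      obtain s where s: "s > 0" "\<forall>x\<in>ball xb s. \<bar>f x - P x\<bar> \<le> \<kappa> / 2 * infdist x \<Sigma> ^ r"
        using TE[of "\<kappa> / 2"] k by auto
      show ?thesis unfolding local_min_at_def
      proof (intro exI[of _ "min \<eta> s"] conjI ballI)
        show "min \<eta> s > 0" using k s by simp
        fix y assume y: "y \<in> ball xb (min \<eta> s)"
        have a: "\<kappa> * infdist y \<Sigma> ^ r \<le> f y - f xb" using k(3) y by simp
        have b: "\<bar>f y - P y\<bar> \<le> \<kappa> / 2 * infdist y \<Sigma> ^ r" using s(2) y by simp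
        have "0 \<le> \<kappa> * infdist y \<Sigma> ^ r" using k by (simp add: infdist_nonneg)
        then show "P xb \<le> P y" using a b Pxb by linarith
      qed
    qed
    have bwd: "local_min_at f xb" if lP: "local_min_at P xb"
    proof (rule ccontr)
      assume nlm: "\<not> local_min_at f xb"
      obtain e where e: "e > 0" "\<forall>y\<in>ball xb e. P xb \<le> P y" using lP unfolding local_min_at_def by blast
      obtain \<kappa> where k: "\<kappa> > 0" "\<forall>x\<in>ball xb (R / 4). f x < f xb \<longrightarrow>
           (\<exists>y. dist y x \<le> infdist x \<Sigma> / 2 \<and> f y < f xb \<and> f y - f xb \<le> - \<kappa> * infdist y \<Sigma> ^ r)"
        using lemmaB[OF r pos(1) pos(3) R(1) xs der gro] by blast
      obtain s where s: "s > 0" "\<forall>x\<in>ball xb s. \<bar>f x - P x\<bar> \<le> \<kappa> / 2 * infdist x \<Sigma> ^ r"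
        using TE[of "\<kappa> / 2"] k by auto
      define e' where "e' = min (R / 4) (min e s) / 2"
      have e': "e' > 0" using R e s by (simp add: e'_def)
      have "\<not> (\<forall>y\<in>ball xb e'. f xb \<le> f y)" using nlm e' unfolding local_min_at_def by blast
      then obtain x where x: "x \<in> ball xb e'" "f x < f xb" by (auto simp: not_le)
      have e'le: "e' \<le> R / 8" "e' \<le> e / 2" "e' \<le> s / 2" by (simp_all add: e'_def)
      have xd: "dist xb x < e'" using x(1) by simp
      have "dist xb x < R / 4" using xd e'le e' by linarith
      then have xR: "x \<in> ball xb (R / 4)" by simp
      obtain y where y: "dist y x \<le> infdist x \<Sigma> / 2" "f y < f xb" "f y - f xb \<le> - \<kappa> * infdist y \<Sigma> ^ r"
        using k(2) xR x(2) by blast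
      have "dist y xb \<le> dist y x + dist x xb" by (rule dist_triangle)
      moreover have "dist y x \<le> infdist x \<Sigma> / 2" by (rule y(1))
      moreover have "infdist x \<Sigma> \<le> dist x xb" by (rule dle)
      moreover have "dist x xb < e'" using xd by (simp add: dist_commute)
      ultimately have "dist y xb < 2 * e'" using zero_le_dist[of x xb] by linarith
      then have yin: "y \<in> ball xb e" "y \<in> ball xb s" using e'le by (auto simp: dist_commute)
      have "\<bar>f y - P y\<bar> \<le> \<kappa> / 2 * infdist y \<Sigma> ^ r" using s(2) yin(2) by blast
      then have "P y < P xb" using y(2,3) Pxb by linarith
      moreover have "P xb \<le> P y" using e(2) yin(1) by blast
      ultimately show False by linarith
    qed
    have part2: "\<exists>\<epsilon>>0. \<forall>h :: real^'n \<Rightarrow> real.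
               (\<exists>\<rho>>0. \<forall>x \<in> cball xb \<rho>. \<bar>h x - h xb\<bar> \<le> \<epsilon> * infdist x \<Sigma> ^ r)
               \<longrightarrow> local_min_at (\<lambda>x. f x + h x) xb" if lm: "local_min_at f xb"
    proof -
      obtain \<kappa> \<eta> where k: "\<kappa> > 0" "\<eta> > 0" "\<forall>x\<in>ball xb \<eta>. \<kappa> * infdist x \<Sigma> ^ r \<le> f x - f xb"
        using Aside[OF lm] by blast
      show ?thesis
      proof (intro exI[of _ \<kappa>] conjI allI impI)
        show "\<kappa> > 0" by (rule k(1))
        fix h :: "real^'n \<Rightarrow> real"
        assume "\<exists>\<rho>>0. \<forall>x \<in> cball xb \<rho>. \<bar>h x - h xb\<bar> \<le> \<kappa> * infdist x \<Sigma> ^ r"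
        then obtain \<rho> where rho: "\<rho> > 0" "\<forall>x \<in> cball xb \<rho>. \<bar>h x - h xb\<bar> \<le> \<kappa> * infdist x \<Sigma> ^ r"
          by blast
        show "local_min_at (\<lambda>x. f x + h x) xb" unfolding local_min_at_def
        proof (intro exI[of _ "min \<eta> \<rho>"] conjI ballI)
          show "min \<eta> \<rho> > 0" using k rho by simp
          fix y assume y: "y \<in> ball xb (min \<eta> \<rho>)"
          have a: "\<kappa> * infdist y \<Sigma> ^ r \<le> f y - f xb" using k(3) y by simp
          have b: "\<bar>h y - h xb\<bar> \<le> \<kappa> * infdist y \<Sigma> ^ r" using rho(2) y by simp
          show "f xb + h xb \<le> f y + h y" using a b by linarith
        qed
      qed
    qed
    show ?thesis using fwd bwd part2 by (auto simp: P_def)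
  qed
qed

end
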